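(* Let $N\ge1$, $n=\sum_{\nu=1}^N n_\nu$, $m\ge1$. For $\nu=1,\dots,N$ let $Q_\nu\in\mathbb{R}^{n_\nu\times n_\nu}$ be symmetric positive definite, $c_\nu\in\mathbb{R}^{n_\nu}$, and $X_\nu\subseteq\mathbb{R}^{n_\nu}$ nonempty, convex and closed; let $X=X_1\times\dots\times X_N$. Let $a\in\mathbb{R}^m$, $a\ge0$, $Q_y\in\mathbb{R}^{m\times m}$ positive definite diagonal, and $b(x)=B^\top x$, $l(x)=L^\top x$ with $B,L\in\mathbb{R}^{n\times m}$. Let $\varphi(x)=\sum_{i=1}^m a_i\max\{(Q_y^{-1}b(x))_i,l_i(x)\}$ and assume there exist $\rho\ge0$, $\omega_1,\omega_2\in\mathbb{R}$ with $\min\{0,\varphi(x)\}\ge\omega_1\|x\|+\omega_2$ for all $x\in X$ with $\|x\|>\rho$. Then the multi-leader-follower game described in the context has a Nash equilibrium.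
   Context: Notation: $x=(x_1,\dots,x_N)$, $x_\nu\in\mathbb{R}^{n_\nu}$, $x_{-\nu}$ = all components other than $x_\nu$. Multi-leader-follower game: given $x$, the follower solves $\min_{y\in\mathbb{R}^m}\tfrac12 y^\top Q_y y-b(x)^\top y$ s.t. $y\ge l(x)$, with unique solution $y(x)=\max\{Q_y^{-1}b(x),l(x)\}$ (componentwise); leader $\nu$ solves $\min_{x_\nu\in X_\nu}\theta_\nu(x_\nu,x_{-\nu})=\tfrac12 x_\nu^\top Q_\nu x_\nu+c_\nu^\top x_\nu+a^\top y(x)$. A Nash equilibrium is $x^*\in X$ with $\theta_\nu(x^*_\nu,x^*_{-\nu})\le\theta_\nu(x_\nu,x^*_{-\nu})$ for all $x_\nu\in X_\nu$ and all $\nu$. *)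

theory Defs
  imports "HOL-Analysis.Analysis"
begin

text \<open>The leaders' joint decision x lives in real^'k (n = CARD('k) coordinates).
  The map blk assigns each coordinate to a leader (players = finite type 'p,
  N = CARD('p)); leader nu's variable x_nu is the block of coordinates k with
  blk k = nu, identified with the subspace of real^'k of vectors vanishing
  outside that block.\<close>

definition proj :: "('k::finite \<Rightarrow> 'p) \<Rightarrow> 'p \<Rightarrow> real^'k \<Rightarrow> real^'k" where
  "proj blk \<nu> x = (\<chi> k. if blk k = \<nu> then x $ k else 0)"

definition block_space :: "('k::finite \<Rightarrow> 'p) \<Rightarrow> 'p \<Rightarrow> (real^'k) set" where
  "block_space blk \<nu> = {v. \<forall>k. blk k \<noteq> \<nu> \<longrightarrow> v $ k = 0}"

definition follower ::
  "real^'m^'m \<Rightarrow> real^'m^'k \<Rightarrow> real^'m^'k \<Rightarrow> real^'k \<Rightarrow> real^'m" where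
  "follower Qy B L x =
     (\<chi> i. max ((matrix_inv Qy *v (transpose B *v x)) $ i) ((transpose L *v x) $ i))"

definition theta ::
  "('k::finite \<Rightarrow> 'p) \<Rightarrow> ('p \<Rightarrow> real^'k^'k) \<Rightarrow> ('p \<Rightarrow> real^'k) \<Rightarrow> real^'m
   \<Rightarrow> real^'m^'m \<Rightarrow> real^'m^'k \<Rightarrow> real^'m^'k \<Rightarrow> 'p \<Rightarrow> real^'k \<Rightarrow> real" where
  "theta blk Q c a Qy B L \<nu> x =
     (1/2) * (proj blk \<nu> x \<bullet> (Q \<nu> *v proj blk \<nu> x)) + c \<nu> \<bullet> proj blk \<nu> x
     + a \<bullet> follower Qy B L x"

definition Xprod :: "('k::finite \<Rightarrow> 'p) \<Rightarrow> ('p \<Rightarrow> (real^'k) set) \<Rightarrow> (real^'k) set" where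
  "Xprod blk Xs = {x. \<forall>\<nu>. proj blk \<nu> x \<in> Xs \<nu>}"

definition nash_equilibrium ::
  "('k::finite \<Rightarrow> 'p) \<Rightarrow> ('p \<Rightarrow> (real^'k) set) \<Rightarrow> ('p \<Rightarrow> real^'k^'k) \<Rightarrow> ('p \<Rightarrow> real^'k)
   \<Rightarrow> real^'m \<Rightarrow> real^'m^'m \<Rightarrow> real^'m^'k \<Rightarrow> real^'m^'k \<Rightarrow> real^'k \<Rightarrow> bool" where
  "nash_equilibrium blk Xs Q c a Qy B L x \<longleftrightarrow>
     x \<in> Xprod blk Xs \<and>
     (\<forall>\<nu>. \<forall>v \<in> Xs \<nu>.
        theta blk Q c a Qy B L \<nu> x \<le> theta blk Q c a Qy B L \<nu> (x - proj blk \<nu> x + v))"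

end

theory Submission
  imports Defs
begin

lemma proj_linear: "linear (proj blk \<nu>)"
  by (rule linearI) (auto simp: proj_def vec_eq_iff)

lemma proj_cont: "continuous_on S (proj blk \<nu>)"
  by (rule linear_continuous_on, rule linear_conv_bounded_linear[THEN iffD1, OF proj_linear])

lemma lin_nth_cont: "continuous_on S (\<lambda>x. ((M::real^'n::finite^'m::finite) *v x) $ i)"
  by (intro continuous_on_component matrix_vector_mult_linear_continuous_on)

lemma follower_cont: "continuous_on S (follower Qy B L)"
proof -
  have "follower Qy B L = (\<lambda>x. \<chi> i. max (((matrix_inv Qy ** transpose B) *v x) $ i) ((transpose L *v x) $ i))"
    unfolding follower_def matrix_vector_mul_assoc by (rule refl)
  then show ?thesis
    by (simp only:) (intro continuous_on_vec_lambda continuous_on_max lin_nth_cont)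
qed

lemma Qproj_cont: "continuous_on S (\<lambda>x. Q *v proj blk \<nu> x)"
  by (rule continuous_on_compose2[OF matrix_vector_mult_linear_continuous_on proj_cont]) auto

lemma g_cont: "continuous_on S (\<lambda>x. proj blk \<nu> x \<bullet> (Q *v proj blk \<nu> x))"
  by (intro continuous_on_inner proj_cont Qproj_cont)

lemma proj_in_block: "proj blk \<nu> x \<in> block_space blk \<nu>"
  by (simp add: proj_def block_space_def)

lemma proj_scale: "proj blk \<nu> (t *\<^sub>R x) = t *\<^sub>R proj blk \<nu> x"
  by (auto simp: proj_def vec_eq_iff)

lemma quad_lower:
  fixes blk :: "'k::finite \<Rightarrow> 'p::finite" and Q :: "'p \<Rightarrow> real^'k^'k"
  assumes Q_pd: "\<And>\<nu> v. v \<in> block_space blk \<nu> \<Longrightarrow> v \<noteq> 0 \<Longrightarrow> v \<bullet> (Q \<nu> *v v) > 0"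
  shows "\<exists>lam>0. \<forall>x. (\<Sum>\<nu>\<in>UNIV. proj blk \<nu> x \<bullet> (Q \<nu> *v proj blk \<nu> x)) \<ge> lam * (norm x)\<^sup>2"
proof -
  define g where "g x = (\<Sum>\<nu>\<in>UNIV. proj blk \<nu> x \<bullet> (Q \<nu> *v proj blk \<nu> x))" for x
  have nn: "proj blk \<nu> x \<bullet> (Q \<nu> *v proj blk \<nu> x) \<ge> 0" for \<nu> x
    using Q_pd[OF proj_in_block, of \<nu> x] by (cases "proj blk \<nu> x = 0") auto
  have gpos: "g x > 0" if x0: "x \<noteq> 0" for x
  proof -
    obtain k where k: "x $ k \<noteq> 0" using x0 by (metis vec_eq_iff zero_index)
    have "proj blk (blk k) x \<noteq> 0" using k by (auto simp: proj_def vec_eq_iff)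
    then have "proj blk (blk k) x \<bullet> (Q (blk k) *v proj blk (blk k) x) > 0"
      using Q_pd[OF proj_in_block] by blast
    then show ?thesis unfolding g_def
      by (intro sum_pos2[where i="blk k"]) (auto intro: nn)
  qed
  have gc: "continuous_on (sphere 0 1) g"
    unfolding g_def by (intro continuous_on_sum g_cont)
  have sne: "sphere (0::real^'k) 1 \<noteq> {}" by simp
  obtain z where z: "z \<in> sphere 0 1" "\<And>y. y \<in> sphere 0 1 \<Longrightarrow> g z \<le> g y"
    using continuous_attains_inf[OF compact_sphere sne gc] by blast
  have "z \<noteq> 0" using z(1) by (metis norm_zero mem_sphere_0 zero_neq_one)
  then have zpos: "g z > 0" using gpos by blast
  have gscale: "g (t *\<^sub>R x) = t\<^sup>2 * g x" for t x
    unfolding g_def by (simp add: proj_scale sum_distrib_left power2_eq_square algebra_simps)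
  show ?thesis
  proof (intro exI[of _ "g z"] conjI allI zpos)
    fix x
    show "g z * (norm x)\<^sup>2 \<le> (\<Sum>\<nu>\<in>UNIV. proj blk \<nu> x \<bullet> (Q \<nu> *v proj blk \<nu> x))"
    proof (cases "x = 0")
      case True then show ?thesis by (auto intro!: sum_nonneg nn)
    next
      case False
      have "g z \<le> g (inverse (norm x) *\<^sub>R x)" using z(2) False by simp
      then have "g z * (norm x)\<^sup>2 \<le> (norm x)\<^sup>2 * g (inverse (norm x) *\<^sub>R x)"
        by (metis mult.commute mult_right_mono zero_le_power2)
      also have "\<dots> = g x" unfolding gscale using False
        by (simp add: power2_eq_square field_simps)
      finally show ?thesis by (simp add: g_def)
    qed
  qed
qed

lemma proj_new:
  assumes "v \<in> block_space blk \<nu>"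
  shows "proj blk \<mu> (x - proj blk \<nu> x + v) = (if \<mu> = \<nu> then v else proj blk \<mu> x)"
  using assms by (auto simp: proj_def block_space_def vec_eq_iff)

lemma c_proj: "c \<in> block_space blk \<nu> \<Longrightarrow> c \<bullet> proj blk \<nu> x = c \<bullet> x"
  by (auto simp: proj_def block_space_def inner_vec_def intro!: sum.cong)

theorem mainTheorem5:
  fixes blk :: "'k::finite \<Rightarrow> 'p::finite"
    and Q :: "'p \<Rightarrow> real^'k^'k" and c :: "'p \<Rightarrow> real^'k"
    and Xs :: "'p \<Rightarrow> (real^'k) set"
    and a :: "real^'m::finite" and Qy :: "real^'m^'m"
    and B L :: "real^'m^'k"
    and \<rho> \<omega>1 \<omega>2 :: real
  assumes Q_sym: "\<And>\<nu> j k. blk j = \<nu> \<Longrightarrow> blk k = \<nu> \<Longrightarrow> Q \<nu> $ j $ k = Q \<nu> $ k $ j"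
    and Q_pd: "\<And>\<nu> v. v \<in> block_space blk \<nu> \<Longrightarrow> v \<noteq> 0 \<Longrightarrow> v \<bullet> (Q \<nu> *v v) > 0"
    and c_block: "\<And>\<nu>. c \<nu> \<in> block_space blk \<nu>"
    and X_sub: "\<And>\<nu>. Xs \<nu> \<subseteq> block_space blk \<nu>"
    and X_ne: "\<And>\<nu>. Xs \<nu> \<noteq> {}"
    and X_convex: "\<And>\<nu>. convex (Xs \<nu>)"
    and X_closed: "\<And>\<nu>. closed (Xs \<nu>)"
    and a_nonneg: "\<And>i. a $ i \<ge> 0"
    and Qy_diag: "\<And>i j. i \<noteq> j \<Longrightarrow> Qy $ i $ j = 0"
    and Qy_pos: "\<And>i. Qy $ i $ i > 0"
    and rho_nonneg: "\<rho> \<ge> 0"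
    and growth: "\<And>x. x \<in> Xprod blk Xs \<Longrightarrow> norm x > \<rho> \<Longrightarrow>
        min 0 (\<Sum>i\<in>UNIV. a $ i * max ((matrix_inv Qy *v (transpose B *v x)) $ i)
                                      ((transpose L *v x) $ i)) \<ge> \<omega>1 * norm x + \<omega>2"
  shows "\<exists>x. nash_equilibrium blk Xs Q c a Qy B L x"
proof -
  define t0 where "t0 \<nu> x = (1/2) * (proj blk \<nu> x \<bullet> (Q \<nu> *v proj blk \<nu> x)) + c \<nu> \<bullet> proj blk \<nu> x" for \<nu> x
  define P where "P x = (\<Sum>\<nu>\<in>UNIV. t0 \<nu> x) + a \<bullet> follower Qy B L x" for x
  define X where "X = Xprod blk Xs"
  have theta_eq: "theta blk Q c a Qy B L \<nu> x = t0 \<nu> x + a \<bullet> follower Qy B L x" for \<nu> x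
    by (simp add: theta_def t0_def)
  obtain lam where lam: "lam > 0"
    "\<And>x. (\<Sum>\<nu>\<in>UNIV. proj blk \<nu> x \<bullet> (Q \<nu> *v proj blk \<nu> x)) \<ge> lam * (norm x)\<^sup>2"
    using quad_lower[of blk Q, OF Q_pd] by blast
  define K where "K = norm (\<Sum>\<nu>\<in>UNIV. c \<nu>) + \<bar>\<omega>1\<bar>"
  have K0: "K \<ge> 0" by (simp add: K_def)
  have lower: "P x \<ge> lam / 2 * (norm x)\<^sup>2 - K * norm x + \<omega>2"
    if xX: "x \<in> X" and xn: "norm x > \<rho>" for x
  proof -
    have s1: "(\<Sum>\<nu>\<in>UNIV. t0 \<nu> x) = (1/2) * (\<Sum>\<nu>\<in>UNIV. proj blk \<nu> x \<bullet> (Q \<nu> *v proj blk \<nu> x))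
        + (\<Sum>\<nu>\<in>UNIV. c \<nu>) \<bullet> x"
    proof -
      have "(\<Sum>\<nu>\<in>UNIV. t0 \<nu> x) = (\<Sum>\<nu>\<in>UNIV. (1/2) * (proj blk \<nu> x \<bullet> (Q \<nu> *v proj blk \<nu> x)))
          + (\<Sum>\<nu>\<in>UNIV. c \<nu> \<bullet> proj blk \<nu> x)"
        unfolding t0_def by (rule sum.distrib)
      also have "(\<Sum>\<nu>\<in>UNIV. c \<nu> \<bullet> proj blk \<nu> x) = (\<Sum>\<nu>\<in>UNIV. c \<nu> \<bullet> x)"
        by (intro sum.cong refl c_proj c_block)
      also have "\<dots> = (\<Sum>\<nu>\<in>UNIV. c \<nu>) \<bullet> x"
        by (rule inner_sum_left[symmetric])
      finally show ?thesis by (simp only: sum_distrib_left)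
    qed
    have s2: "(\<Sum>\<nu>\<in>UNIV. c \<nu>) \<bullet> x \<ge> - norm (\<Sum>\<nu>\<in>UNIV. c \<nu>) * norm x"
      using Cauchy_Schwarz_ineq2[of "\<Sum>\<nu>\<in>UNIV. c \<nu>" x] by (simp add: abs_le_iff)
    have s3: "a \<bullet> follower Qy B L x = (\<Sum>i\<in>UNIV. a $ i * max ((matrix_inv Qy *v (transpose B *v x)) $ i)
                                      ((transpose L *v x) $ i))"
      by (simp add: inner_vec_def follower_def)
    have s4: "a \<bullet> follower Qy B L x \<ge> \<omega>1 * norm x + \<omega>2"
      using growth[of x] xX xn unfolding X_def s3 by linarith
    have s5: "\<omega>1 * norm x \<ge> - \<bar>\<omega>1\<bar> * norm x"
      by (intro mult_right_mono) auto
    have s6: "lam / 2 * (norm x)\<^sup>2 \<le> (1/2) * (\<Sum>\<nu>\<in>UNIV. proj blk \<nu> x \<bullet> (Q \<nu> *v proj blk \<nu> x))"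
      using lam(2)[of x] by simp
    have s7: "K * norm x = norm (\<Sum>\<nu>\<in>UNIV. c \<nu>) * norm x + \<bar>\<omega>1\<bar> * norm x"
      unfolding K_def by (rule distrib_right)
    show ?thesis unfolding P_def s1 using s2 s4 s5 s6 s7 by linarith
  qed
  have Xclosed: "closed X"
  proof -
    have "X = (\<Inter>\<nu>\<in>UNIV. proj blk \<nu> -` Xs \<nu>)" by (auto simp: X_def Xprod_def)
    moreover have "closed (proj blk \<nu> -` Xs \<nu>)" for \<nu>
      by (rule continuous_closed_vimage[OF X_closed]) (rule linear_continuous_at, rule linear_conv_bounded_linear[THEN iffD1, OF proj_linear])
    ultimately show ?thesis by (simp add: closed_INT)
  qed
  define vv where "vv \<nu> = (SOME v. v \<in> Xs \<nu>)" for \<nu>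
  have vv: "vv \<nu> \<in> Xs \<nu>" for \<nu> unfolding vv_def using X_ne by (simp add: some_in_eq)
  define x0 where "x0 = (\<chi> k. vv (blk k) $ k)"
  have "proj blk \<nu> x0 = vv \<nu>" for \<nu>
    using X_sub vv by (fastforce simp: proj_def x0_def vec_eq_iff block_space_def)
  then have x0X: "x0 \<in> X" using vv by (simp add: X_def Xprod_def)
  define D where "D = \<bar>P x0\<bar> + \<bar>\<omega>2\<bar> + 1"
  define R where "R = max \<rho> (max (norm x0) (2 * (K + D) / lam + 1))"
  define S where "S = X \<inter> cball 0 R"
  have Sc: "compact S" unfolding S_def using Xclosed by (simp add: closed_Int_compact)
  have x0S: "x0 \<in> S" unfolding S_def R_def using x0X by auto
  have Pc: "continuous_on S P"
    unfolding P_def t0_def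
    by (intro continuous_intros g_cont proj_cont follower_cont)
  obtain xm where xm: "xm \<in> S" "\<And>y. y \<in> S \<Longrightarrow> P xm \<le> P y"
    using continuous_attains_inf[OF Sc _ Pc] x0S by blast
  have xmX: "xm \<in> X" using xm(1) by (simp add: S_def)
  have far: "P y > P x0" if yX: "y \<in> X" and yR: "norm y > R" for y
  proof -
    define t where "t = norm y"
    have Dpos: "D > 0" unfolding D_def by simp
    have q0: "2 * (K + D) / lam \<ge> 0" using K0 lam(1) Dpos by simp
    have Rge: "R \<ge> \<rho>" "R \<ge> 2 * (K + D) / lam + 1" unfolding R_def by auto
    have t1: "t \<ge> 2 * (K + D) / lam" "t > \<rho>" "t \<ge> 1"
      using yR Rge q0 unfolding t_def by linarith+
    have h1: "2 * (K + D) \<le> t * lam" using t1(1) lam(1) by (simp add: pos_divide_le_eq)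
    have h2: "lam / 2 * t * t = (t * lam) * t / 2" by simp
    have h3: "2 * (K + D) * t \<le> (t * lam) * t" using h1 t1(3) by (intro mult_right_mono) auto
    have h4: "D * 1 \<le> D * t" using Dpos t1(3) by (intro mult_left_mono) auto
    have h5: "(K + D) * t = K * t + D * t" by (rule distrib_right)
    have h6: "lam / 2 * t\<^sup>2 = lam / 2 * t * t" by (simp add: power2_eq_square)
    have "lam / 2 * t\<^sup>2 - K * t + \<omega>2 \<ge> D + \<omega>2"
      using h2 h3 h4 h5 h6 by linarith
    moreover have "D + \<omega>2 > P x0" unfolding D_def by linarith
    ultimately show ?thesis using lower[OF yX t1(2)[unfolded t_def]] unfolding t_def by linarith
  qed
  have minX: "P xm \<le> P y" if "y \<in> X" for y
  proof (cases "norm y \<le> R")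
    case True then show ?thesis using xm(2) that by (simp add: S_def)
  next
    case False then show ?thesis using far[OF that] xm(2)[OF x0S] by linarith
  qed
  show ?thesis
  proof (intro exI[of _ xm])
    show "nash_equilibrium blk Xs Q c a Qy B L xm"
      unfolding nash_equilibrium_def
    proof (intro conjI ballI allI)
      show "xm \<in> Xprod blk Xs" using xmX by (simp add: X_def)
      fix \<nu> v assume v: "v \<in> Xs \<nu>"
      have vb: "v \<in> block_space blk \<nu>" using v X_sub by blast
      define y where "y = xm - proj blk \<nu> xm + v"
      have py: "proj blk \<mu> y = (if \<mu> = \<nu> then v else proj blk \<mu> xm)" for \<mu>
        unfolding y_def by (rule proj_new[OF vb])
      have yX: "y \<in> X" using xmX v py by (simp add: X_def Xprod_def)
      have t0y: "t0 \<mu> y = t0 \<mu> xm" if "\<mu> \<noteq> \<nu>" for \<mu>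
        using that py by (simp add: t0_def)
      have "P y = t0 \<nu> y + (\<Sum>\<mu>\<in>UNIV - {\<nu>}. t0 \<mu> y) + a \<bullet> follower Qy B L y"
        unfolding P_def by (simp add: sum.remove[of UNIV \<nu>])
      moreover have "P xm = t0 \<nu> xm + (\<Sum>\<mu>\<in>UNIV - {\<nu>}. t0 \<mu> xm) + a \<bullet> follower Qy B L xm"
        unfolding P_def by (simp add: sum.remove[of UNIV \<nu>])
      moreover have "(\<Sum>\<mu>\<in>UNIV - {\<nu>}. t0 \<mu> y) = (\<Sum>\<mu>\<in>UNIV - {\<nu>}. t0 \<mu> xm)"
        using t0y by (intro sum.cong) auto
      ultimately show "theta blk Q c a Qy B L \<nu> xm \<le> theta blk Q c a Qy B L \<nu> (xm - proj blk \<nu> xm + v)"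
        using minX[OF yX] unfolding theta_eq y_def[symmetric] by linarith
    qed
  qed
qed

end
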